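(* Let $\mathcal{M}$ be a finite $\mathcal{R}$-trivial monoid with generating set $\mathcal{S}$, let $R$ be a ring with $1\neq 0$, and let $\sigma\in\mathcal{M}$. Let $$T_{[\sigma]}:=\prod_{\tau\in\mathcal{L}^{\mathcal{S}}_\sigma} U_\tau\prod_{\kappa\in\mathcal{S}\setminus\mathcal{L}^{\mathcal{S}}_\sigma}(\mathrm{Id}-U_\kappa)\in\mathrm{Mat}(R,n),$$ with the factors multiplied in any order. Then for every $\mu\in\mathcal{M}$, $(T_{[\sigma]})_{\mu,\mu}=1$ if $\mu\sim\sigma$ and $(T_{[\sigma]})_{\mu,\mu}=0$ otherwise; this holds independently of the order of the factors.
   Context: $\mathcal{M}$ is $\mathcal{R}$-trivial: $\sigma\mathcal{M}=\tau\mathcal{M}$ implies $\sigma=\tau$; $n=\#\mathcal{M}$, and its elements are ordered so that $\#\sigma_1\mathcal{M}\ge\dots\ge\#\sigma_n\mathcal{M}$, with matrix entries indexed by elements of $\mathcal{M}$. $U_\sigma$ is the matrix with $(U_\sigma)_{\tau,\kappa}=1$ if $\tau\sigma=\kappa$ and $0$ otherwise. $\mathcal{L}_\sigma:=\{\tau\in\mathcal{M}:\sigma\tau=\sigma\}$, $\mathcal{L}^{\mathcal{S}}_\sigma:=\mathcal{L}_\sigma\cap\mathcal{S}$, and $\mu\sim\sigma$ (same loop-type) iff $\mathcal{L}_\mu=\mathcal{L}_\sigma$. *)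

theory Defs
  imports "HOL-Analysis.Analysis"
begin

text \<open>The monoid M is the finite type 'm of class monoid_mult; matrices over the
ring 'r are indexed by elements of 'm, i.e. of type 'r ^ 'm ^ 'm
(entry (tau, kappa) is A $ tau $ kappa).\<close>

definition R_trivial :: "('m::monoid_mult) itself \<Rightarrow> bool" where
  "R_trivial _ \<longleftrightarrow> (\<forall>\<sigma> \<tau> :: 'm::monoid_mult. (\<lambda>x. \<sigma> * x) ` UNIV = (\<lambda>x. \<tau> * x) ` UNIV \<longrightarrow> \<sigma> = \<tau>)"

inductive_set generated_monoid :: "('m::monoid_mult) set \<Rightarrow> 'm set" for S where
  one: "1 \<in> generated_monoid S"
| step: "x \<in> generated_monoid S \<Longrightarrow> s \<in> S \<Longrightarrow> x * s \<in> generated_monoid S"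

definition generates :: "('m::monoid_mult) set \<Rightarrow> bool" where
  "generates S \<longleftrightarrow> generated_monoid S = UNIV"

definition U_mat :: "('m::{monoid_mult,finite}) \<Rightarrow> (('r::ring_1, 'm) vec, 'm) vec" where
  "U_mat \<sigma> = (\<chi> \<tau> \<kappa>. if \<tau> * \<sigma> = \<kappa> then 1 else 0)"

definition loops :: "('m::monoid_mult) \<Rightarrow> 'm set" where
  "loops \<sigma> = {\<tau>. \<sigma> * \<tau> = \<sigma>}"

definition same_loop_type :: "('m::monoid_mult) \<Rightarrow> 'm \<Rightarrow> bool" where
  "same_loop_type \<mu> \<sigma> \<longleftrightarrow> loops \<mu> = loops \<sigma>"

definition T_factor :: "('m::{monoid_mult,finite}) set \<Rightarrow> 'm \<Rightarrow> 'm \<Rightarrow> (('r::ring_1, 'm) vec, 'm) vec" where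
  "T_factor S \<sigma> \<kappa> = (if \<kappa> \<in> loops \<sigma> \<inter> S then U_mat \<kappa> else mat 1 - U_mat \<kappa>)"

definition T_prod :: "('m::{monoid_mult,finite}) set \<Rightarrow> 'm \<Rightarrow> 'm list \<Rightarrow> (('r::ring_1, 'm) vec, 'm) vec" where
  "T_prod S \<sigma> ks = foldr (\<lambda>\<kappa> A. T_factor S \<sigma> \<kappa> ** A) ks (mat 1)"

end

theory Submission
  imports Defs
begin

definition upper :: "(('r::ring_1, 'm::{monoid_mult,finite}) vec, 'm) vec \<Rightarrow> bool" where
  "upper A \<longleftrightarrow> (\<forall>\<tau> \<kappa>. A $ \<tau> $ \<kappa> \<noteq> 0 \<longrightarrow> (\<exists>w. \<kappa> = \<tau> * w))"

lemma rt_eq: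
  assumes "R_trivial TYPE('m::monoid_mult)" and "(\<nu>::'m) = \<mu> * a" and "\<mu> = \<nu> * b"
  shows "\<nu> = \<mu>"
proof -
  have "(\<lambda>x. \<nu> * x) ` UNIV = (\<lambda>x. \<mu> * x) ` UNIV"
  proof (intro equalityI subsetI)
    fix z assume "z \<in> (\<lambda>x. \<nu> * x) ` UNIV"
    then obtain x where "z = \<nu> * x" by auto
    hence "z = \<mu> * (a * x)" using assms(2) by (simp add: mult.assoc)
    thus "z \<in> (\<lambda>x. \<mu> * x) ` UNIV" by auto
  next
    fix z assume "z \<in> (\<lambda>x. \<mu> * x) ` UNIV"
    then obtain x where "z = \<mu> * x" by auto
    hence "z = \<nu> * (b * x)" using assms(3) by (simp add: mult.assoc)
    thus "z \<in> (\<lambda>x. \<nu> * x) ` UNIV" by auto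
  qed
  thus ?thesis using assms(1) unfolding R_trivial_def by blast
qed

lemma upper_mult:
  assumes "upper A" "upper B"
  shows "upper (A ** B)"
  unfolding upper_def
proof (intro allI impI)
  fix \<tau> \<kappa>
  assume "(A ** B) $ \<tau> $ \<kappa> \<noteq> 0"
  hence "(\<Sum>\<nu>\<in>UNIV. A $ \<tau> $ \<nu> * B $ \<nu> $ \<kappa>) \<noteq> 0" by (simp add: matrix_matrix_mult_def)
  then obtain \<nu> where "A $ \<tau> $ \<nu> * B $ \<nu> $ \<kappa> \<noteq> 0" by (meson sum.neutral)
  hence "A $ \<tau> $ \<nu> \<noteq> 0" "B $ \<nu> $ \<kappa> \<noteq> 0" by auto
  then obtain a b where "\<nu> = \<tau> * a" "\<kappa> = \<nu> * b" using assms unfolding upper_def by blast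
  thus "\<exists>w. \<kappa> = \<tau> * w" by (metis mult.assoc)
qed

lemma upper_diag:
  assumes rt: "R_trivial TYPE('m)" and "upper A" "upper B"
  shows "(A ** B) $ \<mu> $ \<mu> = A $ \<mu> $ \<mu> * B $ \<mu> $ (\<mu>::'m::{monoid_mult,finite})"
proof -
  have "(A ** B) $ \<mu> $ \<mu> = (\<Sum>\<nu>\<in>UNIV. A $ \<mu> $ \<nu> * B $ \<nu> $ \<mu>)"
    by (simp add: matrix_matrix_mult_def)
  also have "\<dots> = A $ \<mu> $ \<mu> * B $ \<mu> $ \<mu> + (\<Sum>\<nu>\<in>UNIV - {\<mu>}. A $ \<mu> $ \<nu> * B $ \<nu> $ \<mu>)"
    by (simp add: sum.remove)
  also have "(\<Sum>\<nu>\<in>UNIV - {\<mu>}. A $ \<mu> $ \<nu> * B $ \<nu> $ \<mu>) = 0"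
  proof (rule sum.neutral, rule ballI, rule ccontr)
    fix \<nu> assume \<nu>: "\<nu> \<in> UNIV - {\<mu>}" and "A $ \<mu> $ \<nu> * B $ \<nu> $ \<mu> \<noteq> 0"
    hence "A $ \<mu> $ \<nu> \<noteq> 0" "B $ \<nu> $ \<mu> \<noteq> 0" by auto
    then obtain a b where "\<nu> = \<mu> * a" "\<mu> = \<nu> * b" using assms unfolding upper_def by blast
    hence "\<nu> = \<mu>" using rt_eq[OF rt] by blast
    thus False using \<nu> by simp
  qed
  finally show ?thesis by simp
qed

lemma upper_one: "upper (mat 1)"
  unfolding upper_def by (auto simp: mat_def intro: exI[of _ 1])

lemma upper_U: "upper (U_mat k)"
  unfolding upper_def U_mat_def by auto

lemma upper_IU: "upper (mat 1 - U_mat k)"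
  unfolding upper_def U_mat_def by (auto simp: mat_def intro: exI[of _ 1])

lemma factor_props:
  fixes S :: "('m::{monoid_mult,finite}) set"
  shows "upper (T_factor S \<sigma> k :: (('r::ring_1, 'm) vec, 'm) vec) \<and>
    (T_factor S \<sigma> k :: (('r, 'm) vec, 'm) vec) $ \<mu> $ \<mu> =
      (if (k \<in> loops \<sigma> \<inter> S \<longleftrightarrow> \<mu> * k = \<mu>) then 1 else 0)"
  unfolding T_factor_def using upper_U upper_IU
  by (auto simp: U_mat_def mat_def)

lemma prod_props:
  fixes S :: "('m::{monoid_mult,finite}) set"
  assumes rt: "R_trivial TYPE('m)"
  shows "upper (T_prod S \<sigma> ks :: (('r::ring_1, 'm) vec, 'm) vec) \<and>
    (T_prod S \<sigma> ks :: (('r, 'm) vec, 'm) vec) $ \<mu> $ \<mu> =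
      (if (\<forall>k\<in>set ks. k \<in> loops \<sigma> \<inter> S \<longleftrightarrow> \<mu> * k = \<mu>) then 1 else 0)"
proof (induction ks)
  case Nil
  then show ?case using upper_one by (simp add: T_prod_def mat_def)
next
  case (Cons k ks)
  have eq: "(T_prod S \<sigma> (k # ks) :: (('r, 'm) vec, 'm) vec) = T_factor S \<sigma> k ** T_prod S \<sigma> ks"
    by (simp add: T_prod_def)
  have f: "upper (T_factor S \<sigma> k :: (('r, 'm) vec, 'm) vec)"
    "(T_factor S \<sigma> k :: (('r, 'm) vec, 'm) vec) $ \<mu> $ \<mu> = (if (k \<in> loops \<sigma> \<inter> S \<longleftrightarrow> \<mu> * k = \<mu>) then 1 else 0)"
    using factor_props[of S \<sigma> k \<mu>, where 'r='r] by blast+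
  have u: "upper (T_factor S \<sigma> k ** T_prod S \<sigma> ks :: (('r, 'm) vec, 'm) vec)"
    using upper_mult f(1) Cons.IH by blast
  have "(T_factor S \<sigma> k ** T_prod S \<sigma> ks :: (('r, 'm) vec, 'm) vec) $ \<mu> $ \<mu>
     = (T_factor S \<sigma> k :: (('r, 'm) vec, 'm) vec) $ \<mu> $ \<mu> * (T_prod S \<sigma> ks :: (('r, 'm) vec, 'm) vec) $ \<mu> $ \<mu>"
    using upper_diag[OF rt] f(1) Cons.IH by blast
  also have "\<dots> = (if (\<forall>k'\<in>set (k#ks). k' \<in> loops \<sigma> \<inter> S \<longleftrightarrow> \<mu> * k' = \<mu>) then 1 else 0)"
    unfolding f(2) using Cons.IH by (simp only: list.set ball_simps if_distrib) simp
  finally show ?case unfolding eq using u by blast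
qed

lemma loop_split:
  assumes rt: "R_trivial TYPE('m::monoid_mult)"
  shows "(\<nu>::'m) * (y * s) = \<nu> \<longleftrightarrow> \<nu> * y = \<nu> \<and> \<nu> * s = \<nu>"
proof
  assume h: "\<nu> * (y * s) = \<nu>"
  have "\<nu> * y = \<nu>" using rt_eq[OF rt, of "\<nu> * y" \<nu> y s] h by (simp add: mult.assoc)
  thus "\<nu> * y = \<nu> \<and> \<nu> * s = \<nu>" using h by (metis mult.assoc)
next
  assume "\<nu> * y = \<nu> \<and> \<nu> * s = \<nu>"
  thus "\<nu> * (y * s) = \<nu>" by (metis mult.assoc)
qed

lemma gen_transfer:
  assumes rt: "R_trivial TYPE('m::monoid_mult)"
    and hS: "\<forall>s\<in>S. (\<sigma> * s = \<sigma> \<longleftrightarrow> \<mu> * s = \<mu>)"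
    and x: "(x::'m) \<in> generated_monoid S"
  shows "\<sigma> * x = \<sigma> \<longleftrightarrow> \<mu> * x = \<mu>"
  using x
proof induction
  case one
  then show ?case by simp
next
  case (step x s)
  then show ?case using loop_split[OF rt] hS by blast
qed

theorem mainTheorem7:
  fixes S :: "('m::{monoid_mult,finite}) set" and \<sigma> :: 'm
  assumes "R_trivial TYPE('m)"
    and "generates S"
    and "(1::'r::ring_1) \<noteq> 0"
  shows "\<forall>ks \<mu>. distinct ks \<and> set ks = S \<longrightarrow>
           (T_prod S \<sigma> ks :: (('r, 'm) vec, 'm) vec) $ \<mu> $ \<mu> = (if same_loop_type \<mu> \<sigma> then 1 else 0)"
proof (intro allI impI)
  fix ks and \<mu> :: 'm
  assume h: "distinct ks \<and> set ks = S"
  have d: "(T_prod S \<sigma> ks :: (('r, 'm) vec, 'm) vec) $ \<mu> $ \<mu> =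
      (if (\<forall>k\<in>set ks. k \<in> loops \<sigma> \<inter> S \<longleftrightarrow> \<mu> * k = \<mu>) then 1 else 0)"
    using prod_props[OF assms(1)] by blast
  have "(\<forall>k\<in>set ks. k \<in> loops \<sigma> \<inter> S \<longleftrightarrow> \<mu> * k = \<mu>) \<longleftrightarrow> same_loop_type \<mu> \<sigma>"
  proof
    assume a: "\<forall>k\<in>set ks. k \<in> loops \<sigma> \<inter> S \<longleftrightarrow> \<mu> * k = \<mu>"
    hence "\<forall>s\<in>S. (\<sigma> * s = \<sigma> \<longleftrightarrow> \<mu> * s = \<mu>)" using h by (auto simp: loops_def)
    hence "\<forall>x. \<sigma> * x = \<sigma> \<longleftrightarrow> \<mu> * x = \<mu>"
      using gen_transfer[OF assms(1)] assms(2) unfolding generates_def by blast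
    thus "same_loop_type \<mu> \<sigma>" by (auto simp: same_loop_type_def loops_def)
  next
    assume "same_loop_type \<mu> \<sigma>"
    thus "\<forall>k\<in>set ks. k \<in> loops \<sigma> \<inter> S \<longleftrightarrow> \<mu> * k = \<mu>"
      using h by (auto simp: same_loop_type_def loops_def)
  qed
  thus "(T_prod S \<sigma> ks :: (('r, 'm) vec, 'm) vec) $ \<mu> $ \<mu> = (if same_loop_type \<mu> \<sigma> then 1 else 0)"
    using d by simp
qed

end
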